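(* Let $G$ be a graph of order $n\ge2$ with no isolated vertices. Then $n-\gamma_2(G)\le\operatorname{ZIR}(G)\le n-\gamma(G)$, and both bounds are sharp.
   Context: $\gamma(G)$ is the domination number (minimum size of a set $D$ with every vertex in $D$ or adjacent to a vertex of $D$). A 2-dominating set is a set $D$ such that every vertex not in $D$ is adjacent to at least two vertices of $D$; $\gamma_2(G)$ is the minimum size of a 2-dominating set. A nonempty $F\subseteq V(G)$ is a fort if every $v\notin F$ has $|N(v)\cap F|\ne1$. A private fort of $x\in S$ relative to $S$ is a fort $F$ with $S\cap F=\{x\}$; $S$ is a ZIr-set if every element of $S$ has a private fort. $\operatorname{ZIR}(G)$ is the maximum cardinality of an inclusion-maximal ZIr-set. *)

theory Defs
  imports Main
begin

definition graph :: "'a set \<Rightarrow> ('a \<Rightarrow> 'a \<Rightarrow> bool) \<Rightarrow> bool" where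
  "graph V E \<longleftrightarrow> finite V \<and> (\<forall>u v. E u v \<longrightarrow> E v u) \<and> (\<forall>v. \<not> E v v)
     \<and> (\<forall>u v. E u v \<longrightarrow> u \<in> V \<and> v \<in> V)"

definition nbhd :: "'a set \<Rightarrow> ('a \<Rightarrow> 'a \<Rightarrow> bool) \<Rightarrow> 'a \<Rightarrow> 'a set" where
  "nbhd V E v = {u \<in> V. E v u}"

definition no_isolated :: "'a set \<Rightarrow> ('a \<Rightarrow> 'a \<Rightarrow> bool) \<Rightarrow> bool" where
  "no_isolated V E \<longleftrightarrow> (\<forall>v\<in>V. nbhd V E v \<noteq> {})"

definition dominating :: "'a set \<Rightarrow> ('a \<Rightarrow> 'a \<Rightarrow> bool) \<Rightarrow> 'a set \<Rightarrow> bool" where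
  "dominating V E D \<longleftrightarrow> D \<subseteq> V \<and> (\<forall>v\<in>V - D. nbhd V E v \<inter> D \<noteq> {})"

definition domination_number :: "'a set \<Rightarrow> ('a \<Rightarrow> 'a \<Rightarrow> bool) \<Rightarrow> nat" where
  "domination_number V E = Min {card D | D. dominating V E D}"

definition two_dominating :: "'a set \<Rightarrow> ('a \<Rightarrow> 'a \<Rightarrow> bool) \<Rightarrow> 'a set \<Rightarrow> bool" where
  "two_dominating V E D \<longleftrightarrow> D \<subseteq> V \<and> (\<forall>v\<in>V - D. card (nbhd V E v \<inter> D) \<ge> 2)"

definition two_domination_number :: "'a set \<Rightarrow> ('a \<Rightarrow> 'a \<Rightarrow> bool) \<Rightarrow> nat" where
  "two_domination_number V E = Min {card D | D. two_dominating V E D}"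

definition fort :: "'a set \<Rightarrow> ('a \<Rightarrow> 'a \<Rightarrow> bool) \<Rightarrow> 'a set \<Rightarrow> bool" where
  "fort V E F \<longleftrightarrow> F \<subseteq> V \<and> F \<noteq> {} \<and> (\<forall>v\<in>V - F. card (nbhd V E v \<inter> F) \<noteq> 1)"

definition private_fort :: "'a set \<Rightarrow> ('a \<Rightarrow> 'a \<Rightarrow> bool) \<Rightarrow> 'a set \<Rightarrow> 'a \<Rightarrow> 'a set \<Rightarrow> bool" where
  "private_fort V E S x F \<longleftrightarrow> fort V E F \<and> S \<inter> F = {x}"

definition ZIr_set :: "'a set \<Rightarrow> ('a \<Rightarrow> 'a \<Rightarrow> bool) \<Rightarrow> 'a set \<Rightarrow> bool" where
  "ZIr_set V E S \<longleftrightarrow> S \<subseteq> V \<and> (\<forall>x\<in>S. \<exists>F. private_fort V E S x F)"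

definition maximal_ZIr_set :: "'a set \<Rightarrow> ('a \<Rightarrow> 'a \<Rightarrow> bool) \<Rightarrow> 'a set \<Rightarrow> bool" where
  "maximal_ZIr_set V E S \<longleftrightarrow> ZIr_set V E S \<and> (\<forall>T. ZIr_set V E T \<and> S \<subseteq> T \<longrightarrow> T = S)"

definition ZIR :: "'a set \<Rightarrow> ('a \<Rightarrow> 'a \<Rightarrow> bool) \<Rightarrow> nat" where
  "ZIR V E = Max {card S | S. maximal_ZIr_set V E S}"

end

theory Submission
  imports Defs
begin

lemma fin_cards:
  assumes "finite V" "\<And>D. P D \<Longrightarrow> D \<subseteq> V"
  shows "finite {card D | D. P D}"
proof -
  have "{card D | D. P D} \<subseteq> card ` Pow V" using assms(2) by auto
  thus ?thesis using assms(1) finite_subset by blast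
qed

lemma ZIr_compl_dom:
  assumes g: "graph V E" and ni: "no_isolated V E" and z: "ZIr_set V E S"
  shows "dominating V E (V - S)"
  unfolding dominating_def
proof (intro conjI ballI)
  fix v assume v: "v \<in> V - (V - S)"
  show "nbhd V E v \<inter> (V - S) \<noteq> {}"
  proof
    assume emp: "nbhd V E v \<inter> (V - S) = {}"
    have vV: "v \<in> V" and vS: "v \<in> S" using v by auto
    have "nbhd V E v \<noteq> {}" using ni vV unfolding no_isolated_def by blast
    then obtain u where u: "u \<in> nbhd V E v" by blast
    have uV: "u \<in> V" and Evu: "E v u" using u unfolding nbhd_def by auto
    have uS: "u \<in> S" using u uV emp by blast
    obtain F where F: "fort V E F" "S \<inter> F = {u}"
      using z uS unfolding ZIr_set_def private_fort_def by blast
    have "v \<noteq> u" using g Evu unfolding graph_def by metis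
    hence vF: "v \<notin> F" using F(2) vS by blast
    have "nbhd V E v \<inter> F \<subseteq> {u}"
    proof
      fix w assume w: "w \<in> nbhd V E v \<inter> F"
      hence "w \<in> V" unfolding nbhd_def by auto
      hence "w \<in> S" using w emp by blast
      thus "w \<in> {u}" using w F(2) by blast
    qed
    moreover have "u \<in> nbhd V E v \<inter> F" using u F(2) by blast
    ultimately have eq: "nbhd V E v \<inter> F = {u}" by blast
    have "v \<in> V - F" using vV vF by blast
    hence "card (nbhd V E v \<inter> F) \<noteq> 1" using F(1) unfolding fort_def by blast
    thus False using eq by simp
  qed
next
  show "V - S \<subseteq> V" by blast
qed

lemma two_dom_ZIr:
  assumes g: "graph V E" and d: "two_dominating V E D"
  shows "ZIr_set V E (V - D)"
  unfolding ZIr_set_def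
proof (intro conjI ballI)
  fix x assume x: "x \<in> V - D"
  have "fort V E (insert x D)"
    unfolding fort_def
  proof (intro conjI ballI)
    show "insert x D \<subseteq> V" using d x unfolding two_dominating_def by auto
    fix v assume v: "v \<in> V - insert x D"
    have "card (nbhd V E v \<inter> D) \<ge> 2" using d v unfolding two_dominating_def by auto
    moreover have "finite (nbhd V E v \<inter> insert x D)" using g unfolding graph_def nbhd_def by auto
    moreover have "nbhd V E v \<inter> D \<subseteq> nbhd V E v \<inter> insert x D" by auto
    ultimately have "card (nbhd V E v \<inter> insert x D) \<ge> 2"
      by (meson card_mono le_trans)
    thus "card (nbhd V E v \<inter> insert x D) \<noteq> 1" by auto
  qed auto
  moreover have "(V - D) \<inter> insert x D = {x}" using x by auto
  ultimately show "\<exists>F. private_fort V E (V - D) x F" unfolding private_fort_def by blast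
qed auto

lemma extend_max:
  assumes g: "graph V E" and z: "ZIr_set V E S"
  shows "\<exists>T. maximal_ZIr_set V E T \<and> S \<subseteq> T"
proof -
  let ?C = "{T. ZIr_set V E T \<and> S \<subseteq> T}"
  have "?C \<subseteq> Pow V" unfolding ZIr_set_def by auto
  hence fin: "finite ?C" using g unfolding graph_def by (meson finite_Pow_iff finite_subset)
  have "?C \<noteq> {}" using z by auto
  from finite_has_maximal[OF fin this] obtain m where
    m: "m \<in> ?C" "\<forall>b\<in>?C. m \<le> b \<longrightarrow> m = b" by blast
  have "maximal_ZIr_set V E m" unfolding maximal_ZIr_set_def
    using m by auto
  thus ?thesis using m by auto
qed

lemma max_fin: assumes "graph V E" shows "finite {card S | S. maximal_ZIr_set V E S}"
  using assms by (intro fin_cards[of V]) (auto simp: graph_def maximal_ZIr_set_def ZIr_set_def)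

lemma max_ne: assumes "graph V E" shows "{card S | S. maximal_ZIr_set V E S} \<noteq> {}"
proof -
  have "ZIr_set V E {}" unfolding ZIr_set_def by auto
  then obtain T where "maximal_ZIr_set V E T" using extend_max[OF assms] by blast
  thus ?thesis by auto
qed

lemma upper:
  assumes g: "graph V E" and ni: "no_isolated V E"
  shows "ZIR V E \<le> card V - domination_number V E"
proof -
  have "ZIR V E \<in> {card S | S. maximal_ZIr_set V E S}"
    unfolding ZIR_def using Max_in[OF max_fin[OF g] max_ne[OF g]] .
  then obtain S where S: "maximal_ZIr_set V E S" "ZIR V E = card S" by auto
  have z: "ZIr_set V E S" using S unfolding maximal_ZIr_set_def by auto
  have d: "dominating V E (V - S)" using ZIr_compl_dom[OF g ni z] .
  have fin: "finite {card D | D. dominating V E D}"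
    using g by (intro fin_cards[of V]) (auto simp: graph_def dominating_def)
  have "domination_number V E \<le> card (V - S)"
    unfolding domination_number_def using d by (intro Min_le[OF fin]) auto
  moreover have "card (V - S) = card V - card S" "card S \<le> card V"
    using z g unfolding ZIr_set_def graph_def by (auto simp: card_Diff_subset card_mono finite_subset)
  ultimately show ?thesis using S by auto
qed

lemma lower:
  assumes g: "graph V E"
  shows "card V - two_domination_number V E \<le> ZIR V E"
proof -
  have fin: "finite {card D | D. two_dominating V E D}"
    using g by (intro fin_cards[of V]) (auto simp: graph_def two_dominating_def)
  have "two_dominating V E V" unfolding two_dominating_def by auto
  hence ne: "{card D | D. two_dominating V E D} \<noteq> {}" by auto
  have "two_domination_number V E \<in> {card D | D. two_dominating V E D}"
    unfolding two_domination_number_def using Min_in[OF fin ne] .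
  then obtain D where D: "two_dominating V E D" "two_domination_number V E = card D" by auto
  obtain T where T: "maximal_ZIr_set V E T" "V - D \<subseteq> T"
    using extend_max[OF g two_dom_ZIr[OF g D(1)]] by blast
  have fV: "finite V" using g unfolding graph_def by auto
  have "card (V - D) = card V - card D" using D(1) fV
    by (auto simp: two_dominating_def card_Diff_subset finite_subset)
  moreover have "card (V - D) \<le> card T"
    using T fV by (intro card_mono) (auto simp: maximal_ZIr_set_def ZIr_set_def finite_subset)
  moreover have "card T \<le> ZIR V E"
    unfolding ZIR_def using T by (intro Max_ge[OF max_fin[OF g]]) auto
  ultimately show ?thesis using D by auto
qed

definition C4V :: "nat set" where "C4V = {0,1,2,3}"
definition C4E :: "nat \<Rightarrow> nat \<Rightarrow> bool" where "C4E u v = (u < 4 \<and> v < 4 \<and> odd (u + v))"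

lemma C4V_eq: "C4V = {0..<4}" unfolding C4V_def by auto

lemma C4_graph: "graph C4V C4E"
  unfolding graph_def C4E_def C4V_eq by (auto simp: add.commute)

lemma C4_card: "card C4V = 4" unfolding C4V_def by simp

lemma C4_nbhd: "v < 4 \<Longrightarrow> nbhd C4V C4E v = {u. u < 4 \<and> odd (u + v)}"
  unfolding nbhd_def C4V_eq C4E_def by (auto simp: add.commute)

lemma C4_ni: "no_isolated C4V C4E"
  unfolding no_isolated_def
proof
  fix v assume v: "v \<in> C4V"
  have "(if even v then 1 else 0) \<in> nbhd C4V C4E v"
  proof -
    have "v < 4" using v by (simp add: C4V_eq)
    thus ?thesis by (auto simp: C4_nbhd)
  qed
  thus "nbhd C4V C4E v \<noteq> {}" by auto
qed

lemma C4_g2: "two_domination_number C4V C4E \<le> 2"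
proof -
  have td: "two_dominating C4V C4E {0,2}"
    unfolding two_dominating_def
  proof (intro conjI ballI)
    fix v assume v: "v \<in> C4V - {0, 2}"
    hence "v = 1 \<or> v = 3" unfolding C4V_def by auto
    hence "nbhd C4V C4E v \<inter> {0,2} = {0,2}" by (auto simp: C4_nbhd)
    thus "2 \<le> card (nbhd C4V C4E v \<inter> {0, 2})" by simp
  qed (auto simp: C4V_def)
  have fin: "finite {card D | D. two_dominating C4V C4E D}"
    by (intro fin_cards[of C4V]) (auto simp: C4V_def two_dominating_def)
  have mem: "card {0::nat,2} \<in> {card D | D. two_dominating C4V C4E D}" using td by blast
  have "two_domination_number C4V C4E \<le> card {0::nat,2}"
    unfolding two_domination_number_def using Min_le[OF fin mem] .
  thus ?thesis by simp
qed

lemma C4_g: "domination_number C4V C4E \<ge> 2"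
proof -
  have fin: "finite {card D | D. dominating C4V C4E D}"
    by (intro fin_cards[of C4V]) (auto simp: C4V_def dominating_def)
  have "dominating C4V C4E C4V" unfolding dominating_def by auto
  hence ne: "{card D | D. dominating C4V C4E D} \<noteq> {}" by auto
  have "domination_number C4V C4E \<in> {card D | D. dominating C4V C4E D}"
    unfolding domination_number_def using Min_in[OF fin ne] .
  then obtain D where D: "dominating C4V C4E D" "domination_number C4V C4E = card D" by auto
  have fD: "finite D" using D(1) unfolding dominating_def C4V_def by (auto intro: finite_subset)
  have "card D \<ge> 2"
  proof (rule ccontr)
    assume "\<not> card D \<ge> 2"
    hence "card D = 0 \<or> card D = 1" by auto
    hence "D = {} \<or> (\<exists>x. D = {x})" using fD by (auto simp: card_1_singleton_iff)
    thus False
    proof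
      assume "D = {}"
      with D(1) show False unfolding dominating_def C4V_def by auto
    next
      assume "\<exists>x. D = {x}"
      then obtain x where x: "D = {x}" by blast
      hence xV: "x < 4" using D(1) unfolding dominating_def C4V_eq by auto
      define w where "w = (if x < 2 then x + 2 else x - 2)"
      have "x = 0 \<or> x = 1 \<or> x = 2 \<or> x = 3" using xV by auto
      hence w: "w < 4" "w \<noteq> x" "even (x + w)" unfolding w_def by auto
      have "w \<in> C4V - D" using w x by (auto simp: C4V_eq)
      moreover have "nbhd C4V C4E w \<inter> D = {}" using w x by (simp add: C4_nbhd)
      ultimately show False using D(1) unfolding dominating_def by auto
    qed
  qed
  thus ?thesis using D by simp
qed

lemma C4_both:
  "ZIR C4V C4E = card C4V - two_domination_number C4V C4E \<and>
   ZIR C4V C4E = card C4V - domination_number C4V C4E"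
proof -
  have a: "card C4V - two_domination_number C4V C4E \<le> ZIR C4V C4E" by (rule lower[OF C4_graph])
  have b: "ZIR C4V C4E \<le> card C4V - domination_number C4V C4E" by (rule upper[OF C4_graph C4_ni])
  have c: "card C4V = 4" by (rule C4_card)
  have d: "domination_number C4V C4E \<ge> 2" by (rule C4_g)
  have e: "two_domination_number C4V C4E \<le> 2" by (rule C4_g2)
  show ?thesis using a b c d e by linarith
qed

theorem proposition4p1:
  shows "(\<forall>(V :: 'a set) E. graph V E \<and> card V \<ge> 2 \<and> no_isolated V E \<longrightarrow>
            card V - two_domination_number V E \<le> ZIR V E \<and>
            ZIR V E \<le> card V - domination_number V E)
       \<and> (\<exists>(V :: nat set) E. graph V E \<and> card V \<ge> 2 \<and> no_isolated V E \<and>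
            ZIR V E = card V - two_domination_number V E)
       \<and> (\<exists>(V :: nat set) E. graph V E \<and> card V \<ge> 2 \<and> no_isolated V E \<and>
            ZIR V E = card V - domination_number V E)"
proof (intro conjI allI impI)
  fix V :: "'a set" and E
  assume "graph V E \<and> card V \<ge> 2 \<and> no_isolated V E"
  thus "card V - two_domination_number V E \<le> ZIR V E" "ZIR V E \<le> card V - domination_number V E"
    using lower upper by auto
next
  have c: "card C4V \<ge> 2" using C4_card by simp
  show "\<exists>(V :: nat set) E. graph V E \<and> card V \<ge> 2 \<and> no_isolated V E \<and>
            ZIR V E = card V - two_domination_number V E"
    using C4_graph C4_ni c C4_both by blast
  show "\<exists>(V :: nat set) E. graph V E \<and> card V \<ge> 2 \<and> no_isolated V E \<and>
            ZIR V E = card V - domination_number V E"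
    using C4_graph C4_ni c C4_both by blast
qed

end
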